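(* Let $n\ge 3$ and let $C_n$ be the cycle on $n$ vertices. Then $$\tau(C_n)=\begin{cases}4 & \text{if } n\equiv 0 \pmod 4,\\ n & \text{if } n\equiv 1,3 \pmod 4,\\ \left(\frac n2\right)^2 & \text{if } n\equiv 2 \pmod 4.\end{cases}$$
   Context: A set $D \subseteq V(G)$ is a total dominating set of a graph $G$ if every vertex of $G$ has a neighbor in $D$. $\gamma_t(G)$ is the minimum cardinality of a total dominating set; a minimum one is a $\gamma_t(G)$-set, and $\tau(G)$ is the number of $\gamma_t(G)$-sets. *)

theory Defs
  imports Main
begin

definition total_dominating_set :: "'a set \<Rightarrow> ('a \<Rightarrow> 'a \<Rightarrow> bool) \<Rightarrow> 'a set \<Rightarrow> bool" where
  "total_dominating_set V E D \<longleftrightarrow> D \<subseteq> V \<and> (\<forall>v\<in>V. \<exists>u\<in>D. E v u)"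

definition total_domination_number :: "'a set \<Rightarrow> ('a \<Rightarrow> 'a \<Rightarrow> bool) \<Rightarrow> nat" where
  "total_domination_number V E = (LEAST k. \<exists>D. total_dominating_set V E D \<and> card D = k)"

definition min_tds :: "'a set \<Rightarrow> ('a \<Rightarrow> 'a \<Rightarrow> bool) \<Rightarrow> 'a set \<Rightarrow> bool" where
  "min_tds V E D \<longleftrightarrow> total_dominating_set V E D \<and> card D = total_domination_number V E"

definition num_min_tds :: "'a set \<Rightarrow> ('a \<Rightarrow> 'a \<Rightarrow> bool) \<Rightarrow> nat" where
  "num_min_tds V E = card {D. min_tds V E D}"

definition cycle_verts :: "nat \<Rightarrow> nat set" where
  "cycle_verts n = {0..<n}"

definition cycle_adj :: "nat \<Rightarrow> nat \<Rightarrow> nat \<Rightarrow> bool" where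
  "cycle_adj n i j \<longleftrightarrow> i < n \<and> j < n \<and> (j = (i + 1) mod n \<or> i = (j + 1) mod n)"

end

theory Submission
  imports Defs
begin


definition CV :: "nat \<Rightarrow> nat set \<Rightarrow> bool" where
  "CV m S \<longleftrightarrow> S \<subseteq> {..<m} \<and> (\<forall>i<m. i \<in> S \<or> Suc i mod m \<in> S)"

lemma mod2: fixes x m :: nat assumes "x < 2*m" shows "x mod m = (if x < m then x else x - m)"
proof (cases "x < m")
  case True then show ?thesis by (simp add: mod_less)
next
  case False
  then have "x mod m = (x - m) mod m" by (simp add: le_mod_geq)
  also have "\<dots> = x - m" using assms False by simp
  finally show ?thesis using False by simp
qed

lemma Suc_mod: "i < m \<Longrightarrow> Suc i mod m = (if Suc i < m then Suc i else 0)"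
proof (cases "Suc i < m")
  case False
  assume "i < m" then have "Suc i = m" using False by simp
  then show ?thesis by simp
qed simp

lemma rot_inj: "inj_on (\<lambda>i. Suc i mod m) {..<m}"
  unfolding inj_on_def by (auto simp: Suc_mod split: if_splits)

lemma rot_img: "(\<lambda>i. Suc i mod m) ` {..<m} = {..<m}"
proof (cases "m = 0")
  case False
  show ?thesis
    by (rule endo_inj_surj) (use False rot_inj in auto)
qed simp

lemma B_card:
  assumes "S \<subseteq> {..<m}"
  shows "card {i. i<m \<and> Suc i mod m \<in> S} = card S"
proof -
  let ?f = "\<lambda>i. Suc i mod m"
  let ?B = "{i. i<m \<and> Suc i mod m \<in> S}"
  have "?f ` ?B = S"
  proof
    show "?f ` ?B \<subseteq> S" by auto
    show "S \<subseteq> ?f ` ?B"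
    proof
      fix s assume "s \<in> S"
      then have "s \<in> ?f ` {..<m}" using assms rot_img by auto
      then obtain i where "i < m" "s = ?f i" by auto
      then show "s \<in> ?f ` ?B" using \<open>s \<in> S\<close> by auto
    qed
  qed
  moreover have "inj_on ?f ?B" using rot_inj by (rule inj_on_subset) auto
  ultimately show ?thesis using card_image by fastforce
qed

lemma CV_lower: assumes "CV m S" shows "m \<le> 2 * card S"
proof -
  let ?B = "{i. i<m \<and> Suc i mod m \<in> S}"
  have S: "S \<subseteq> {..<m}" using assms by (simp add: CV_def)
  have "{..<m} \<subseteq> S \<union> ?B" using assms by (auto simp: CV_def)
  then have "card {..<m} \<le> card (S \<union> ?B)"
    by (intro card_mono) (use S finite_subset in auto)
  also have "\<dots> \<le> card S + card ?B" by (rule card_Un_le)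
  finally show ?thesis using B_card[OF S] by simp
qed

lemma inter_card:
  assumes "CV m S"
  shows "card (S \<inter> {i. i<m \<and> Suc i mod m \<in> S}) + m = 2 * card S"
proof -
  let ?B = "{i. i<m \<and> Suc i mod m \<in> S}"
  have S: "S \<subseteq> {..<m}" using assms by (simp add: CV_def)
  have U: "S \<union> ?B = {..<m}" using assms by (auto simp: CV_def)
  have fS: "finite S" using S finite_subset by auto
  have "card (S \<union> ?B) + card (S \<inter> ?B) = card S + card ?B"
    using card_Un_Int[of S ?B] fS by simp
  then show ?thesis using U B_card[OF S] by simp
qed

lemma card_evens: "card {x. x < m \<and> even x} = (m+1) div 2"
proof (induction m)
  case (Suc m)
  show ?case
  proof (cases "even m")
    case True
    have "{x. x < Suc m \<and> even x} = insert m {x. x < m \<and> even x}" using True by (auto simp: less_Suc_eq)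
    then show ?thesis using Suc True by simp
  next
    case False
    have "{x. x < Suc m \<and> even x} = {x. x < m \<and> even x}" using False by (auto simp: less_Suc_eq)
    then show ?thesis using Suc False by simp
  qed
qed simp

lemma card_odds: "card {x. x < m \<and> odd x} = m div 2"
proof (induction m)
  case (Suc m)
  show ?case
  proof (cases "odd m")
    case True
    have "{x. x < Suc m \<and> odd x} = insert m {x. x < m \<and> odd x}" using True by (auto simp: less_Suc_eq)
    then show ?thesis using Suc True by simp
  next
    case False
    have "{x. x < Suc m \<and> odd x} = {x. x < m \<and> odd x}" using False by (auto simp: less_Suc_eq)
    then show ?thesis using Suc False by simp
  qed
qed simp

lemma CV_even_min:
  assumes "even m" "CV m S" "card S = m div 2"
  shows "S = {i. i<m \<and> even i} \<or> S = {i. i<m \<and> odd i}"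
proof -
  let ?B = "{i. i<m \<and> Suc i mod m \<in> S}"
  have S: "S \<subseteq> {..<m}" using assms by (simp add: CV_def)
  have fS: "finite S" using S finite_subset by auto
  have "card (S \<inter> ?B) = 0" using inter_card[OF assms(2)] assms by simp
  then have E: "S \<inter> ?B = {}" using fS by simp
  have alt: "\<And>i. i < m \<Longrightarrow> i \<in> S \<longleftrightarrow> Suc i mod m \<notin> S"
    using E assms(2) unfolding CV_def by blast
  have P: "\<And>i. i < m \<Longrightarrow> (i \<in> S \<longleftrightarrow> (even i \<longleftrightarrow> 0 \<in> S))"
  proof -
    fix i show "i < m \<Longrightarrow> (i \<in> S \<longleftrightarrow> (even i \<longleftrightarrow> 0 \<in> S))"
    proof (induction i)
      case (Suc i)
      then have "Suc i mod m = Suc i" by simp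
      then show ?case using alt[of i] Suc by auto
    qed simp
  qed
  show ?thesis
  proof (cases "0 \<in> S")
    case True then have "S = {i. i<m \<and> even i}" using P S by auto
    then show ?thesis by simp
  next
    case False then have "S = {i. i<m \<and> odd i}" using P S by auto
    then show ?thesis by simp
  qed
qed

lemma CV_evens: "even m \<Longrightarrow> CV m {i. i<m \<and> even i}"
  unfolding CV_def by (auto simp: Suc_mod)

lemma CV_odds: "even m \<Longrightarrow> CV m {i. i<m \<and> odd i}"
proof -
  assume e: "even m"
  have "odd i \<or> odd (Suc i mod m)" if "i < m" for i
  proof (cases "Suc i < m")
    case False then have "Suc i = m" using that by simp
    then show ?thesis using e by auto
  qed auto
  then show ?thesis unfolding CV_def by auto
qed

lemma count_even:
  assumes "even m" "m > 0"
  shows "card {S. CV m S \<and> card S = (m+1) div 2} = 2"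
proof -
  have h: "(m+1) div 2 = m div 2" using assms by simp
  have "{S. CV m S \<and> card S = (m+1) div 2} = {{i. i<m \<and> even i}, {i. i<m \<and> odd i}}"
    using CV_even_min[OF assms(1)] CV_evens[OF assms(1)] CV_odds[OF assms(1)]
      card_evens[of m] card_odds[of m] h by auto
  moreover have "{i. i<m \<and> even i} \<noteq> {i. i<m \<and> odd i}" using assms by auto
  ultimately show ?thesis by simp
qed

definition aa :: "nat \<Rightarrow> nat \<Rightarrow> nat \<Rightarrow> nat" where
  "aa m j i = (i + (m - Suc j)) mod m"

definition PP :: "nat \<Rightarrow> nat \<Rightarrow> nat set" where
  "PP m j = {i. i < m \<and> even (aa m j i)}"

lemma aa_Suc: "aa m j (Suc i mod m) = Suc (aa m j i) mod m"
  unfolding aa_def by (simp add: mod_add_left_eq mod_Suc_eq)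

lemma aa_lt: "m > 0 \<Longrightarrow> aa m j i < m"
  unfolding aa_def by simp

lemma aa_top: assumes "j < m" "i < m" shows "aa m j i = m - 1 \<longleftrightarrow> i = j"
proof -
  have "i + (m - Suc j) < 2*m" using assms by simp
  from mod2[OF this] show ?thesis unfolding aa_def using assms by auto
qed

lemma aa_inj: assumes "j < m" shows "inj_on (aa m j) {..<m}"
proof
  fix x y assume xy: "x \<in> {..<m}" "y \<in> {..<m}" "aa m j x = aa m j y"
  have "x + (m - Suc j) < 2*m" "y + (m - Suc j) < 2*m" using assms xy by auto
  from mod2[OF this(1)] mod2[OF this(2)] xy(3) show "x = y" unfolding aa_def using assms xy
    by (auto split: if_splits)
qed

lemma aa_img: assumes "j < m" shows "aa m j ` {..<m} = {..<m}"
  by (rule endo_inj_surj) (use assms aa_inj aa_lt in auto)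

lemma PP_card: assumes "j < m" shows "card (PP m j) = (m+1) div 2"
proof -
  have "aa m j ` PP m j = {x. x < m \<and> even x}"
  proof
    show "aa m j ` PP m j \<subseteq> {x. x < m \<and> even x}" using aa_lt assms by (auto simp: PP_def)
    show "{x. x < m \<and> even x} \<subseteq> aa m j ` PP m j"
    proof
      fix x assume "x \<in> {x. x < m \<and> even x}"
      then have "x \<in> aa m j ` {..<m}" "even x" using aa_img[OF assms] by auto
      then show "x \<in> aa m j ` PP m j" by (auto simp: PP_def)
    qed
  qed
  moreover have "inj_on (aa m j) (PP m j)" using aa_inj[OF assms] by (rule inj_on_subset) (auto simp: PP_def)
  ultimately show ?thesis using card_image card_evens by metis
qed

lemma aa_step: assumes "j < m" "i < m" "i \<noteq> j"
  shows "aa m j (Suc i mod m) = Suc (aa m j i)"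
proof -
  have "aa m j i < m" "aa m j i \<noteq> m - 1" using aa_lt aa_top assms by auto
  then have "Suc (aa m j i) < m" by simp
  then show ?thesis using aa_Suc by simp
qed

lemma PP_CV: assumes "odd m" "j < m" shows "CV m (PP m j)"
  unfolding CV_def
proof (intro conjI allI impI)
  show "PP m j \<subseteq> {..<m}" by (auto simp: PP_def)
  fix i assume i: "i < m"
  have m0: "m > 0" using assms by simp
  show "i \<in> PP m j \<or> Suc i mod m \<in> PP m j"
  proof (cases "i = j")
    case True
    then have "aa m j i = m - 1" using aa_top assms i by simp
    then show ?thesis using assms i by (auto simp: PP_def)
  next
    case False
    then show ?thesis using aa_step[OF assms(2) i False] i m0 by (auto simp: PP_def)
  qed
qed

lemma PP_double: assumes "odd m" "j < m"
  shows "j \<in> PP m j" "Suc j mod m \<in> PP m j"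
    "\<And>i. i < m \<Longrightarrow> i \<in> PP m j \<Longrightarrow> Suc i mod m \<in> PP m j \<Longrightarrow> i = j"
proof -
  have t: "aa m j j = m - 1" using aa_top assms by simp
  then show "j \<in> PP m j" using assms by (auto simp: PP_def)
  have "aa m j (Suc j mod m) = 0" using aa_Suc[of m j j] t assms by simp
  then show "Suc j mod m \<in> PP m j" using assms by (auto simp: PP_def)
  fix i assume "i < m" "i \<in> PP m j" "Suc i mod m \<in> PP m j"
  then show "i = j" using aa_step[OF assms(2), of i] by (auto simp: PP_def) presburger
qed

lemma PP_inj: assumes "odd m" shows "inj_on (PP m) {..<m}"
proof
  fix j j' assume "j \<in> {..<m}" "j' \<in> {..<m}" "PP m j = PP m j'"
  then show "j = j'" using PP_double[OF assms, of j] PP_double[OF assms, of j'] by auto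
qed

lemma CV_odd_min:
  assumes "odd m" "CV m S" "card S = (m+1) div 2"
  shows "\<exists>j<m. S = PP m j"
proof -
  let ?B = "{i. i<m \<and> Suc i mod m \<in> S}"
  have S: "S \<subseteq> {..<m}" using assms by (simp add: CV_def)
  have "card (S \<inter> ?B) = 1" using inter_card[OF assms(2)] assms by simp
  then obtain j where J: "S \<inter> ?B = {j}" by (rule card_1_singletonE)
  then have j: "j < m" "j \<in> S" "Suc j mod m \<in> S" by auto
  have alt: "\<And>i. i < m \<Longrightarrow> i \<noteq> j \<Longrightarrow> i \<in> S \<longleftrightarrow> Suc i mod m \<notin> S"
    using J assms(2) unfolding CV_def by blast
  have D: "t < m \<Longrightarrow> ((Suc j + t) mod m \<in> S \<longleftrightarrow> even t)" for t
  proof (induction t)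
    case 0 then show ?case using j by simp
  next
    case (Suc t)
    let ?p = "(Suc j + t) mod m"
    have "Suc j + t < 2*m" using Suc j by simp
    from mod2[OF this] have "?p \<noteq> j" using Suc j by auto
    moreover have "?p < m" using j by simp
    moreover have "Suc ?p mod m = (Suc j + Suc t) mod m" by (simp add: mod_Suc_eq)
    ultimately show ?case using alt[of ?p] Suc by auto
  qed
  have "S = PP m j"
  proof (rule set_eqI)
    fix i
    show "i \<in> S \<longleftrightarrow> i \<in> PP m j"
    proof (cases "i < m")
      case True
      have "(Suc j + aa m j i) mod m = (Suc j + (i + (m - Suc j))) mod m"
        unfolding aa_def by (metis mod_add_right_eq)
      also have "\<dots> = i" using True j by simp
      finally have "i \<in> S \<longleftrightarrow> even (aa m j i)" using D[of "aa m j i"] aa_lt j by auto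
      then show ?thesis using True by (simp add: PP_def)
    next
      case False then show ?thesis using S by (auto simp: PP_def)
    qed
  qed
  then show ?thesis using j by auto
qed

lemma count_odd:
  assumes "odd m"
  shows "card {S. CV m S \<and> card S = (m+1) div 2} = m"
proof -
  have "{S. CV m S \<and> card S = (m+1) div 2} = PP m ` {..<m}"
    using CV_odd_min[OF assms] PP_CV[OF assms] PP_card by auto
  then show ?thesis using card_image[OF PP_inj[OF assms]] by simp
qed

lemma CV_bound: "CV m S \<Longrightarrow> (m+1) div 2 \<le> card S"
  using CV_lower[of m S] by simp

lemma count_CV: "m > 0 \<Longrightarrow> card {S. CV m S \<and> card S = (m+1) div 2} = (if even m then 2 else m)"
  using count_even count_odd by auto

lemma pre_img:
  assumes "c ` {..<m} = A" "T \<subseteq> A"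
  shows "c ` {i. i < m \<and> c i \<in> T} = T"
  using assms by auto

lemma transfer_bound:
  assumes inj: "inj_on c {..<m}" and img: "c ` {..<m} = A"
    and T: "T \<subseteq> A" "\<forall>i<m. c i \<in> T \<or> c (Suc i mod m) \<in> T"
  shows "(m+1) div 2 \<le> card T"
proof -
  let ?S = "{i. i < m \<and> c i \<in> T}"
  have "CV m ?S" using T unfolding CV_def by (auto intro: mod_less_divisor)
  then have "(m+1) div 2 \<le> card ?S" by (rule CV_bound)
  moreover have "card ?S = card T"
    using pre_img[OF img T(1)] card_image[OF inj_on_subset[OF inj]] by (metis (no_types, lifting) lessThan_iff mem_Collect_eq subsetI)
  ultimately show ?thesis by simp
qed

lemma transfer_count:
  assumes inj: "inj_on c {..<m}" and img: "c ` {..<m} = A" and m0: "m > 0"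
  shows "card {T. T \<subseteq> A \<and> (\<forall>i<m. c i \<in> T \<or> c (Suc i mod m) \<in> T) \<and> card T = (m+1) div 2}
     = (if even m then 2 else m)"
proof -
  let ?k = "(m+1) div 2"
  let ?M = "{S. CV m S \<and> card S = ?k}"
  have "{T. T \<subseteq> A \<and> (\<forall>i<m. c i \<in> T \<or> c (Suc i mod m) \<in> T) \<and> card T = ?k} = image c ` ?M"
  proof (rule set_eqI, rule iffI)
    fix T assume "T \<in> {T. T \<subseteq> A \<and> (\<forall>i<m. c i \<in> T \<or> c (Suc i mod m) \<in> T) \<and> card T = ?k}"
    then have T: "T \<subseteq> A" "\<forall>i<m. c i \<in> T \<or> c (Suc i mod m) \<in> T" "card T = ?k" by auto
    let ?S = "{i. i < m \<and> c i \<in> T}"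
    have "CV m ?S" using T m0 unfolding CV_def by auto
    moreover have "card ?S = card T"
      using pre_img[OF img T(1)] card_image[OF inj_on_subset[OF inj]] by (metis (no_types, lifting) lessThan_iff mem_Collect_eq subsetI)
    moreover have "T = c ` ?S" using pre_img[OF img T(1)] by simp
    ultimately show "T \<in> image c ` ?M" using T(3) by auto
  next
    fix T assume "T \<in> image c ` ?M"
    then obtain S where S: "CV m S" "card S = ?k" "T = c ` S" by auto
    have Sm: "S \<subseteq> {..<m}" using S(1) by (simp add: CV_def)
    have mem: "\<And>i. i < m \<Longrightarrow> c i \<in> T \<longleftrightarrow> i \<in> S"
      using S(3) Sm inj unfolding inj_on_def by auto
    have "T \<subseteq> A" using img Sm S(3) by auto
    moreover have "\<forall>i<m. c i \<in> T \<or> c (Suc i mod m) \<in> T"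
      using S(1) mem m0 unfolding CV_def by auto
    moreover have "card T = ?k" using S card_image[OF inj_on_subset[OF inj Sm]] by simp
    ultimately show "T \<in> {T. T \<subseteq> A \<and> (\<forall>i<m. c i \<in> T \<or> c (Suc i mod m) \<in> T) \<and> card T = ?k}" by auto
  qed
  moreover have "inj_on (image c) ?M"
    using inj_on_image_Pow[OF inj] by (rule inj_on_subset) (auto simp: CV_def)
  ultimately show ?thesis using card_image count_CV[OF m0] by metis
qed



definition Q :: "nat \<Rightarrow> nat set \<Rightarrow> bool" where
  "Q n D \<longleftrightarrow> D \<subseteq> {..<n} \<and> (\<forall>u<n. u \<in> D \<or> (u+2) mod n \<in> D)"

lemma adj_back:
  assumes "u < n" "v < n"
  shows "(v = Suc u mod n) \<longleftrightarrow> (u = (v + (n - 1)) mod n)"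
proof -
  have "v + (n - 1) < 2*n" using assms by simp
  from mod2[OF this] Suc_mod[OF assms(1)] show ?thesis using assms by auto
qed

lemma tds_iff:
  assumes "n \<ge> 3"
  shows "total_dominating_set (cycle_verts n) (cycle_adj n) D \<longleftrightarrow> Q n D"
proof -
  have V: "cycle_verts n = {..<n}" by (auto simp: cycle_verts_def)
  have nb: "(\<exists>u\<in>D. cycle_adj n v u) \<longleftrightarrow> (Suc v mod n \<in> D \<or> (v + (n - 1)) mod n \<in> D)"
    if "D \<subseteq> {..<n}" "v < n" for v
  proof
    assume "\<exists>u\<in>D. cycle_adj n v u"
    then obtain u where u: "u \<in> D" "cycle_adj n v u" by auto
    then have "u < n" using that by auto
    then show "Suc v mod n \<in> D \<or> (v + (n - 1)) mod n \<in> D"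
      using u adj_back[of u n v] that unfolding cycle_adj_def by auto
  next
    assume "Suc v mod n \<in> D \<or> (v + (n - 1)) mod n \<in> D"
    moreover have "(v + (n - 1)) mod n < n" "Suc v mod n < n" using that by auto
    ultimately show "\<exists>u\<in>D. cycle_adj n v u"
      using adj_back[of "(v + (n - 1)) mod n" n v] that unfolding cycle_adj_def by auto
  qed
  have eq: "(\<forall>v<n. Suc v mod n \<in> D \<or> (v + (n - 1)) mod n \<in> D) \<longleftrightarrow> (\<forall>u<n. u \<in> D \<or> (u+2) mod n \<in> D)"
  proof
    assume H: "\<forall>v<n. Suc v mod n \<in> D \<or> (v + (n - 1)) mod n \<in> D"
    show "\<forall>u<n. u \<in> D \<or> (u+2) mod n \<in> D"
    proof (intro allI impI)
      fix u assume u: "u < n"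
      let ?v = "Suc u mod n"
      have "?v < n" using u by simp
      moreover have "Suc ?v mod n = (u+2) mod n" by (simp add: mod_Suc_eq)
      moreover have "(?v + (n - 1)) mod n = u"
      proof -
        have "(?v + (n - 1)) mod n = (Suc u + (n - 1)) mod n" by (simp add: mod_add_left_eq)
        also have "Suc u + (n - 1) = u + n" using u by simp
        finally show ?thesis using u by simp
      qed
      ultimately show "u \<in> D \<or> (u+2) mod n \<in> D" using H by metis
    qed
  next
    assume H: "\<forall>u<n. u \<in> D \<or> (u+2) mod n \<in> D"
    show "\<forall>v<n. Suc v mod n \<in> D \<or> (v + (n - 1)) mod n \<in> D"
    proof (intro allI impI)
      fix v assume v: "v < n"
      let ?u = "(v + (n - 1)) mod n"
      have "?u < n" using v by simp
      moreover have "(?u + 2) mod n = Suc v mod n"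
      proof -
        have "(?u + 2) mod n = (v + (n - 1) + 2) mod n" by (metis mod_add_left_eq)
        also have "v + (n - 1) + 2 = Suc v + n" using v by simp
        finally show ?thesis by (metis mod_add_self2)
      qed
      ultimately show "Suc v mod n \<in> D \<or> (v + (n - 1)) mod n \<in> D" using H by metis
    qed
  qed
  have nb2: "(\<forall>v\<in>{..<n}. \<exists>u\<in>D. cycle_adj n v u) \<longleftrightarrow> (\<forall>v<n. Suc v mod n \<in> D \<or> (v + (n - 1)) mod n \<in> D)"
    if "D \<subseteq> {..<n}" using nb[OF that] by auto
  show ?thesis
    unfolding total_dominating_set_def Q_def V using nb2 eq by blast
qed

lemma num_eq:
  assumes "n \<ge> 3" "\<forall>D. Q n D \<longrightarrow> g \<le> card D" "\<exists>D. Q n D \<and> card D = g"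
  shows "num_min_tds (cycle_verts n) (cycle_adj n) = card {D. Q n D \<and> card D = g}"
proof -
  have L: "total_domination_number (cycle_verts n) (cycle_adj n) = g"
    unfolding total_domination_number_def tds_iff[OF assms(1)]
    by (rule Least_equality) (use assms in auto)
  show ?thesis unfolding num_min_tds_def min_tds_def L tds_iff[OF assms(1)] ..
qed

lemma odd_case:
  assumes n3: "n \<ge> 3" and o: "odd n"
  shows "num_min_tds (cycle_verts n) (cycle_adj n) = n"
proof -
  define c where "c = (\<lambda>i. (2*i) mod n)"
  have n0: "n > 0" using n3 by simp
  have inj: "inj_on c {..<n}"
  proof
    fix x y assume xy: "x \<in> {..<n}" "y \<in> {..<n}" "c x = c y"
    have "2*x < 2*n" "2*y < 2*n" using xy by auto
    from mod2[OF this(1)] mod2[OF this(2)] xy(3)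
    have "(if 2*x<n then 2*x else 2*x-n) = (if 2*y<n then 2*y else 2*y-n)" unfolding c_def by simp
    then show "x = y" using o by (split if_splits; presburger)
  qed
  have img: "c ` {..<n} = {..<n}"
    by (rule endo_inj_surj) (use inj n0 in \<open>auto simp: c_def\<close>)
  have cs: "c (Suc i mod n) = (c i + 2) mod n" for i
  proof -
    have "c (Suc i mod n) = (2 * Suc i) mod n" unfolding c_def by (metis mod_mult_right_eq)
    also have "\<dots> = (2*i + 2) mod n" by simp
    also have "\<dots> = (c i + 2) mod n" unfolding c_def by (metis mod_add_left_eq)
    finally show ?thesis .
  qed
  have all: "(\<forall>u<n. R u) \<longleftrightarrow> (\<forall>i<n. R (c i))" for R
    using img by (metis imageI lessThan_iff imageE)
  have Qc: "Q n D \<longleftrightarrow> D \<subseteq> {..<n} \<and> (\<forall>i<n. c i \<in> D \<or> c (Suc i mod n) \<in> D)" for D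
    unfolding Q_def cs using all[of "\<lambda>u. u \<in> D \<or> (u + 2) mod n \<in> D"] by simp
  have cnt: "card {D. Q n D \<and> card D = (n+1) div 2} = n"
    using transfer_count[OF inj img n0] o unfolding Qc by simp
  have bound: "\<forall>D. Q n D \<longrightarrow> (n+1) div 2 \<le> card D"
    using transfer_bound[OF inj img] unfolding Qc by blast
  have ex: "\<exists>D. Q n D \<and> card D = (n+1) div 2"
    using cnt n0 by (metis (mono_tags, lifting) card.empty empty_Collect_eq less_not_refl)
  show ?thesis using num_eq[OF n3 bound ex] cnt by simp
qed

lemma even_case:
  assumes n3: "n \<ge> 3" and n: "n = 2*m"
  shows "num_min_tds (cycle_verts n) (cycle_adj n) = (if even m then 2 else m) * (if even m then 2 else m)"
proof -
  have m0: "m > 0" using n3 n by simp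
  define c0 where "c0 = (\<lambda>i::nat. 2*i)"
  define c1 where "c1 = (\<lambda>i::nat. 2*i+1)"
  define E where "E = c0 ` {..<m}"
  define Od where "Od = c1 ` {..<m}"
  have inj0: "inj_on c0 {..<m}" unfolding c0_def inj_on_def by auto
  have inj1: "inj_on c1 {..<m}" unfolding c1_def inj_on_def by auto
  have EOd: "E \<inter> Od = {}" unfolding E_def Od_def c0_def c1_def by auto presburger
  have Ealt: "u \<in> E \<longleftrightarrow> u < n \<and> even u" for u
  proof
    assume "u < n \<and> even u"
    then have "u = c0 (u div 2)" "u div 2 < m" using n unfolding c0_def by auto
    then show "u \<in> E" unfolding E_def by blast
  qed (use n in \<open>auto simp: E_def c0_def\<close>)
  have Odalt: "u \<in> Od \<longleftrightarrow> u < n \<and> odd u" for u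
  proof
    assume "u < n \<and> odd u"
    then have "u = c1 (u div 2)" "u div 2 < m" using n unfolding c1_def by auto
    then show "u \<in> Od" unfolding Od_def by blast
  qed (use n in \<open>auto simp: Od_def c1_def\<close>)
  have EOU: "{..<n} = E \<union> Od" using Ealt Odalt by auto
  have k0: "(2*i+2) mod n = 2*(Suc i mod m)" if "i < m" for i
  proof -
    have "2*i+2 < 2*n" using that n by simp
    from mod2[OF this] Suc_mod[OF that] show ?thesis using n that by auto
  qed
  have k1: "(2*i+1+2) mod n = 2*(Suc i mod m)+1" if "i < m" for i
  proof -
    have l: "2*i+1+2 < 2*n" using that n by simp
    show ?thesis
    proof (cases "Suc i < m")
      case True then show ?thesis using mod2[OF l] n by simp
    next
      case False then have "Suc i = m" using that by simp
      then show ?thesis using mod2[OF l] n by simp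
    qed
  qed
  define cov0 where "cov0 X \<longleftrightarrow> (\<forall>i<m. c0 i \<in> X \<or> c0 (Suc i mod m) \<in> X)" for X
  define cov1 where "cov1 X \<longleftrightarrow> (\<forall>i<m. c1 i \<in> X \<or> c1 (Suc i mod m) \<in> X)" for X
  have QE: "Q n D \<longleftrightarrow> D \<subseteq> {..<n} \<and> cov0 D \<and> cov1 D" for D
  proof
    assume q: "Q n D"
    have "cov0 D" unfolding cov0_def c0_def
    proof (intro allI impI)
      fix i assume i: "i < m"
      then have "2*i < n" using n by simp
      then show "2 * i \<in> D \<or> 2 * (Suc i mod m) \<in> D" using q k0[OF i] unfolding Q_def by metis
    qed
    moreover have "cov1 D" unfolding cov1_def c1_def
    proof (intro allI impI)
      fix i assume i: "i < m"
      then have "2*i+1 < n" using n by simp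
      then show "2 * i + 1 \<in> D \<or> 2 * (Suc i mod m) + 1 \<in> D" using q k1[OF i] unfolding Q_def by metis
    qed
    ultimately show "D \<subseteq> {..<n} \<and> cov0 D \<and> cov1 D" using q by (simp add: Q_def)
  next
    assume h: "D \<subseteq> {..<n} \<and> cov0 D \<and> cov1 D"
    have "u \<in> D \<or> (u+2) mod n \<in> D" if u: "u < n" for u
    proof (cases "even u")
      case True
      then have "u = 2*(u div 2)" "u div 2 < m" using u n by auto
      then show ?thesis using h k0[of "u div 2"] unfolding cov0_def c0_def by metis
    next
      case False
      then have "u = 2*(u div 2)+1" "u div 2 < m" using u n by auto
      then show ?thesis using h k1[of "u div 2"] unfolding cov1_def c1_def by metis
    qed
    then show "Q n D" using h by (simp add: Q_def)
  qed
  have c0E: "c0 i \<in> E" "c0 (Suc i mod m) \<in> E" if "i < m" for i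
    using that m0 unfolding E_def by auto
  have c1O: "c1 i \<in> Od" "c1 (Suc i mod m) \<in> Od" if "i < m" for i
    using that m0 unfolding Od_def by auto
  have cov0E: "cov0 D \<longleftrightarrow> cov0 (D \<inter> E)" for D unfolding cov0_def using c0E by auto
  have cov1O: "cov1 D \<longleftrightarrow> cov1 (D \<inter> Od)" for D unfolding cov1_def using c1O by auto
  define k where "k = (m+1) div 2"
  define M0 where "M0 = {X. X \<subseteq> E \<and> cov0 X \<and> card X = k}"
  define M1 where "M1 = {X. X \<subseteq> Od \<and> cov1 X \<and> card X = k}"
  have b0: "X \<subseteq> E \<Longrightarrow> cov0 X \<Longrightarrow> k \<le> card X" for X
    using transfer_bound[OF inj0 E_def[symmetric]] unfolding cov0_def k_def by blast
  have b1: "X \<subseteq> Od \<Longrightarrow> cov1 X \<Longrightarrow> k \<le> card X" for X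
    using transfer_bound[OF inj1 Od_def[symmetric]] unfolding cov1_def k_def by blast
  have cM0: "card M0 = (if even m then 2 else m)"
    using transfer_count[OF inj0 E_def[symmetric] m0] unfolding M0_def cov0_def k_def by simp
  have cM1: "card M1 = (if even m then 2 else m)"
    using transfer_count[OF inj1 Od_def[symmetric] m0] unfolding M1_def cov1_def k_def by simp
  have fE: "finite E" "finite Od" unfolding E_def Od_def by auto
  have splitc: "card D = card (D \<inter> E) + card (D \<inter> Od)" if "D \<subseteq> {..<n}" for D
  proof -
    have e: "D = (D \<inter> E) \<union> (D \<inter> Od)" using that EOU by auto
    have "card D = card ((D \<inter> E) \<union> (D \<inter> Od))" using e by (rule arg_cong)
    also have "card ((D \<inter> E) \<union> (D \<inter> Od)) = card (D \<inter> E) + card (D \<inter> Od)"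
      by (rule card_Un_disjoint) (use fE EOd in auto)
    finally show ?thesis .
  qed
  have bound: "\<forall>D. Q n D \<longrightarrow> 2*k \<le> card D"
  proof (intro allI impI)
    fix D assume "Q n D"
    then have h0: "D \<subseteq> {..<n} \<and> cov0 D \<and> cov1 D" by (rule QE[THEN iffD1])
    then have h: "D \<subseteq> {..<n}" "cov0 (D \<inter> E)" "cov1 (D \<inter> Od)"
      using cov0E[of D] cov1O[of D] by blast+
    show "2*k \<le> card D" using b0[OF _ h(2)] b1[OF _ h(3)] splitc[OF h(1)] by simp
  qed
  have setq: "{D. Q n D \<and> card D = 2*k} = (\<lambda>(X,Y). X \<union> Y) ` (M0 \<times> M1)"
  proof (rule set_eqI, rule iffI)
    fix D assume "D \<in> {D. Q n D \<and> card D = 2*k}"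
    then have q: "Q n D" "card D = 2*k" by auto
    then have h0: "D \<subseteq> {..<n} \<and> cov0 D \<and> cov1 D" using QE[THEN iffD1] by blast
    then have h: "D \<subseteq> {..<n}" "cov0 (D \<inter> E)" "cov1 (D \<inter> Od)"
      using cov0E[of D] cov1O[of D] by blast+
    have "k \<le> card (D \<inter> E)" "k \<le> card (D \<inter> Od)" using b0[OF _ h(2)] b1[OF _ h(3)] by auto
    then have "card (D \<inter> E) = k" "card (D \<inter> Od) = k" using splitc[OF h(1)] q(2) by auto
    then have "(D \<inter> E, D \<inter> Od) \<in> M0 \<times> M1" using h unfolding M0_def M1_def by auto
    moreover have "D = (D \<inter> E) \<union> (D \<inter> Od)" using h(1) EOU by auto
    ultimately show "D \<in> (\<lambda>(X,Y). X \<union> Y) ` (M0 \<times> M1)" by (metis (no_types, lifting) case_prod_conv image_eqI)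
  next
    fix D assume "D \<in> (\<lambda>(X,Y). X \<union> Y) ` (M0 \<times> M1)"
    then obtain X Y where XY: "X \<in> M0" "Y \<in> M1" "D = X \<union> Y" by auto
    have sub: "X \<subseteq> E" "Y \<subseteq> Od" using XY unfolding M0_def M1_def by auto
    have "D \<subseteq> {..<n}" using XY(3) sub EOU by auto
    moreover have "cov0 D" "cov1 D" using XY unfolding M0_def M1_def cov0_def cov1_def by auto
    moreover have "card D = card X + card Y"
      unfolding XY(3) by (rule card_Un_disjoint) (use fE EOd sub finite_subset in auto)
    moreover have "card X = k" "card Y = k" using XY unfolding M0_def M1_def by auto
    ultimately show "D \<in> {D. Q n D \<and> card D = 2*k}" using QE[of D] by auto
  qed
  have inj: "inj_on (\<lambda>(X,Y). X \<union> Y) (M0 \<times> M1)"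
  proof (rule inj_onI, clarify)
    fix X Y X' Y' assume h: "X \<in> M0" "Y \<in> M1" "X' \<in> M0" "Y' \<in> M1" "X \<union> Y = X' \<union> Y'"
    have sub: "X \<subseteq> E" "Y \<subseteq> Od" "X' \<subseteq> E" "Y' \<subseteq> Od" using h unfolding M0_def M1_def by auto
    show "X = X' \<and> Y = Y'" using sub EOd h(5) by blast
  qed
  have cnt: "card {D. Q n D \<and> card D = 2*k} = (if even m then 2 else m) * (if even m then 2 else m)"
    unfolding setq card_image[OF inj] card_cartesian_product cM0 cM1 ..
  have ex: "\<exists>D. Q n D \<and> card D = 2*k"
  proof (rule ccontr)
    assume "\<not> ?thesis"
    then have "{D. Q n D \<and> card D = 2*k} = {}" by auto
    then have "card {D. Q n D \<and> card D = 2*k} = 0" by (simp only: card.empty)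
    then show False using cnt m0 by (simp split: if_splits)
  qed
  show ?thesis using num_eq[OF n3 bound ex] cnt by simp
qed


theorem theorem4p1:
  fixes n :: nat
  assumes "n \<ge> 3"
  shows "num_min_tds (cycle_verts n) (cycle_adj n) =
           (if n mod 4 = 0 then 4
            else if n mod 4 = 1 \<or> n mod 4 = 3 then n
            else (n div 2)^2)"
proof (cases "even n")
  case False
  have "n mod 4 \<noteq> 0" "n mod 4 = 1 \<or> n mod 4 = 3" using False by presburger+
  then show ?thesis using odd_case[OF assms False] by simp
next
  case True
  define m where "m = n div 2"
  have n: "n = 2*m" using True unfolding m_def by simp
  note E = even_case[OF assms n]
  show ?thesis
  proof (cases "n mod 4 = 0")
    case True
    then have "even m" using n by presburger
    then show ?thesis using E True by simp
  next
    case False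
    then have "odd m" "n mod 4 = 2" using n by presburger+
    then show ?thesis using E False by (simp add: m_def power2_eq_square)
  qed
qed

end
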